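(* Let $k\ge1$, $s=2k+1$, and let $f:[-k,k]^2\to[n]^2$ be injective with number of tiles $|T(f)|=t+1\ge2$. Then $$\gamma(f)\ge t\Big(2-\frac{2}{s}\Big).$$ Moreover, if two tiles of $f$ have more than $35$ elements each, then $$\gamma(f)\ge 2t\Big(1-\frac1s\Big)+4.$$
   Context: Every vertex $x\in[n]^2$ has four incident edges $\uparrow(x),\downarrow(x),\rightarrow(x),\leftarrow(x)$, where $\rightarrow(i,j)=\leftarrow(i+1,j)$ is the edge between $(i,j)$ and $(i+1,j)$ and $\uparrow(i,j)=\downarrow(i,j+1)$ the edge between $(i,j)$ and $(i,j+1)$; for boundary vertices the edges leading out of $[n]^2$ are included. The tiles $T(f)$ of $f$ are the connected components of the graph on $f([-k,k]^2)$ in which $a,b$ are adjacent iff $a-b\in\{\pm(0,1),\pm(1,0)\}$. The constraint graph $G(f)=(V,E)$ is the multigraph whose vertices are grid edges and whose edge multiset consists of the pair $(\rightarrow(f(u)),\leftarrow(f(u+(1,0))))$ for each $u$ with $u,u+(1,0)\in[-k,k]^2$ and $f(u+(1,0))\neq f(u)+(1,0)$, and the pair $(\uparrow(f(u)),\downarrow(f(u+(0,1))))$ for each $u$ with $u,u+(0,1)\in[-k,k]^2$ and $f(u+(0,1))\ne f(u)+(0,1)$; $V$ is the set of grid edges appearing in some pair. $\gamma(f)=|V|-(\text{number of connected components of }G(f))$. *)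

theory Defs
  imports Complex_Main
begin

text \<open>A grid edge is represented by its lower/left
endpoint: H (i,j) is the edge between (i,j) and (i+1,j); V (i,j) the edge between
(i,j) and (i,j+1). Edges leaving [n]^2 are thereby automatically included.\<close>

datatype gedge = H "int \<times> int" | V "int \<times> int"

fun eright :: "int \<times> int \<Rightarrow> gedge" where "eright (i,j) = H (i,j)"
fun eleft  :: "int \<times> int \<Rightarrow> gedge" where "eleft (i,j) = H (i-1,j)"
fun eup    :: "int \<times> int \<Rightarrow> gedge" where "eup (i,j) = V (i,j)"
fun edown  :: "int \<times> int \<Rightarrow> gedge" where "edown (i,j) = V (i,j-1)"

definition box :: "int \<Rightarrow> (int \<times> int) set" where
  "box k = {-k..k} \<times> {-k..k}"

definition grid :: "int \<Rightarrow> (int \<times> int) set" where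
  "grid n = {1..n} \<times> {1..n}"

definition components :: "'a set \<Rightarrow> ('a \<times> 'a) set \<Rightarrow> 'a set set" where
  "components A E = A // (((E \<union> E\<inverse>) \<inter> (A \<times> A))\<^sup>* \<inter> (A \<times> A))"

definition gadj :: "int \<times> int \<Rightarrow> int \<times> int \<Rightarrow> bool" where
  "gadj a b \<longleftrightarrow> (fst a - fst b, snd a - snd b) \<in> {(0,1),(0,-1),(1,0),(-1,0)}"

definition tiles :: "(int \<times> int \<Rightarrow> int \<times> int) \<Rightarrow> int \<Rightarrow> (int \<times> int) set set" where
  "tiles f k = components (f ` box k) {(a,b). a \<in> f ` box k \<and> b \<in> f ` box k \<and> gadj a b}"

text \<open>Edge set of the constraint graph (multiplicities are irrelevant for |V| and components).\<close>
definition cpairs :: "(int \<times> int \<Rightarrow> int \<times> int) \<Rightarrow> int \<Rightarrow> (gedge \<times> gedge) set" where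
  "cpairs f k =
     {(eright (f (a,b)), eleft (f (a+1,b))) | a b.
        (a,b) \<in> box k \<and> (a+1,b) \<in> box k \<and> f (a+1,b) \<noteq> (fst (f (a,b)) + 1, snd (f (a,b)))}
   \<union> {(eup (f (a,b)), edown (f (a,b+1))) | a b.
        (a,b) \<in> box k \<and> (a,b+1) \<in> box k \<and> f (a,b+1) \<noteq> (fst (f (a,b)), snd (f (a,b)) + 1)}"

definition cverts :: "(int \<times> int \<Rightarrow> int \<times> int) \<Rightarrow> int \<Rightarrow> gedge set" where
  "cverts f k = fst ` cpairs f k \<union> snd ` cpairs f k"

definition gamma :: "(int \<times> int \<Rightarrow> int \<times> int) \<Rightarrow> int \<Rightarrow> int" where
  "gamma f k = int (card (cverts f k)) - int (card (components (cverts f k) (cpairs f k)))"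

end

theory Submission
  imports Defs
begin

definition crel :: "'a set \<Rightarrow> ('a \<times> 'a) set \<Rightarrow> ('a \<times> 'a) set" where
  "crel A E = (((E \<union> E\<inverse>) \<inter> (A \<times> A))\<^sup>* \<inter> (A \<times> A))"

lemma components_crel: "components A E = A // crel A E"
  unfolding components_def crel_def ..

lemma crel_equiv: "equiv A (crel A E)"
proof (rule equivI)
  show "crel A E \<subseteq> A \<times> A" unfolding crel_def by blast
  show "refl_on A (crel A E)" unfolding crel_def refl_on_def by blast
  have "sym ((E \<union> E\<inverse>) \<inter> (A \<times> A))" unfolding sym_def by blast
  hence "sym (((E \<union> E\<inverse>) \<inter> (A \<times> A))\<^sup>*)" by (rule sym_rtrancl)
  moreover have "sym (A \<times> A)" unfolding sym_def by blast
  ultimately show "sym (crel A E)" unfolding crel_def by (rule sym_Int)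
  show "trans (crel A E)" unfolding crel_def
    by (rule trans_Int) (auto simp: trans_def)
qed

lemma crel_base: "(x,y) \<in> E \<Longrightarrow> x \<in> A \<Longrightarrow> y \<in> A \<Longrightarrow> (x,y) \<in> crel A E"
  unfolding crel_def by blast

lemma comp_closed:
  assumes "C \<in> components A E" "x \<in> C" "(x,y) \<in> E \<or> (y,x) \<in> E" "y \<in> A"
  shows "y \<in> C"
proof -
  have eq: "equiv A (crel A E)" by (rule crel_equiv)
  have CA: "C \<in> A // crel A E" using assms(1) components_crel by metis
  have "x \<in> A" using in_quotient_imp_subset[OF eq CA] assms(2) by blast
  have "(x,y) \<in> crel A E" using assms(3,4) \<open>x \<in> A\<close> unfolding crel_def by blast
  thus ?thesis using in_quotient_imp_closed[OF eq CA assms(2)] by blast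
qed

lemma comp_sum_card:
  assumes "finite A"
  shows "(\<Sum>C\<in>components A E. card C) = card A"
proof -
  have eq: "equiv A (crel A E)" by (rule crel_equiv)
  have fin: "\<forall>C\<in>A // crel A E. finite C"
    using assms finite_equiv_class equiv_type[OF eq] by blast
  have "card (\<Union>(A // crel A E)) = (\<Sum>C\<in>A // crel A E. card C)"
    by (rule card_Union_disjoint) (use quotient_disj[OF eq] fin in \<open>auto simp: pairwise_def disjnt_def\<close>)
  thus ?thesis using Union_quotient[OF eq] components_crel by metis
qed

lemma comp_finite: "finite A \<Longrightarrow> finite (components A E)"
  by (simp add: components_crel finite_quotient crel_equiv equiv_type)

lemma comp_card_half:
  assumes "finite A"
    and "\<And>x. x \<in> A \<Longrightarrow> \<exists>y\<in>A. y \<noteq> x \<and> ((x,y) \<in> E \<or> (y,x) \<in> E)"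
  shows "2 * card (components A E) \<le> card A"
proof -
  have eq: "equiv A (crel A E)" by (rule crel_equiv)
  have big: "2 \<le> card C" if C: "C \<in> components A E" for C
  proof -
    have CA: "C \<in> A // crel A E" using C components_crel by metis
    obtain x where x: "C = crel A E `` {x}" "x \<in> A" using CA by (rule quotientE)
    obtain y where y: "y \<in> A" "y \<noteq> x" "(x,y) \<in> E \<or> (y,x) \<in> E" using assms(2)[OF x(2)] by blast
    have "x \<in> C" using x equiv_class_self[OF eq] by blast
    have "y \<in> C" by (rule comp_closed[OF C \<open>x \<in> C\<close> y(3) y(1)])
    have "finite C" using assms finite_equiv_class equiv_type[OF eq] CA by blast
    have "card {x,y} \<le> card C" using \<open>finite C\<close> \<open>x\<in>C\<close> \<open>y\<in>C\<close> by (intro card_mono) auto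
    thus ?thesis using y(2) by simp
  qed
  have "2 * card (components A E) = (\<Sum>C\<in>components A E. 2)" by simp
  also have "\<dots> \<le> (\<Sum>C\<in>components A E. card C)" by (rule sum_mono) (rule big)
  also have "\<dots> = card A" by (rule comp_sum_card[OF assms(1)])
  finally show ?thesis .
qed


lemma boundary_count:
  fixes I :: "(int \<times> int) set" and sh :: "int \<times> int \<Rightarrow> int \<times> int"
    and \<pi> :: "int \<times> int \<Rightarrow> int" and \<phi> :: "int \<times> int \<Rightarrow> int"
  assumes fin: "finite I"
    and adj: "\<And>p. gadj p (sh p)"
    and pi: "\<And>p. \<pi> (sh p) = \<pi> p"
    and phi: "\<And>p. \<phi> (sh p) = \<phi> p + 1"
  shows "(\<Sum>T\<in>components I {(a,b). a \<in> I \<and> b \<in> I \<and> gadj a b}. card (\<pi> ` T))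
         \<le> card {p\<in>I. sh p \<notin> I}"
proof -
  define E where "E = {(a,b). a \<in> I \<and> b \<in> I \<and> gadj a b}"
  define B where "B = {p\<in>I. sh p \<notin> I}"
  define Ts where "Ts = components I E"
  have eq: "equiv I (crel I E)" by (rule crel_equiv)
  have TsQ: "Ts = I // crel I E" unfolding Ts_def by (rule components_crel)
  have finT: "\<And>T. T \<in> Ts \<Longrightarrow> finite T"
    using fin finite_equiv_class equiv_type[OF eq] TsQ by blast
  have TsubI: "\<And>T. T \<in> Ts \<Longrightarrow> T \<subseteq> I" using in_quotient_imp_subset[OF eq] TsQ by blast
  have finTs: "finite Ts" unfolding Ts_def by (rule comp_finite[OF fin])
  have each: "card (\<pi> ` T) \<le> card (T \<inter> B)" if T: "T \<in> Ts" for T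
  proof -
    have "\<pi> ` T \<subseteq> \<pi> ` (T \<inter> B)"
    proof
      fix y assume "y \<in> \<pi> ` T"
      define S where "S = {p\<in>T. \<pi> p = y}"
      have Sfin: "finite S" using finT[OF T] unfolding S_def by simp
      have Sne: "S \<noteq> {}" using \<open>y \<in> \<pi> ` T\<close> unfolding S_def by blast
      have "Max (\<phi> ` S) \<in> \<phi> ` S" using Sfin Sne by simp
      then obtain p where p: "p \<in> S" "\<phi> p = Max (\<phi> ` S)" by auto
      have "sh p \<notin> S"
      proof
        assume "sh p \<in> S"
        hence "\<phi> (sh p) \<le> Max (\<phi> ` S)" using Sfin by simp
        thus False using p(2) phi[of p] by simp
      qed
      hence nT: "sh p \<notin> T" using pi[of p] p(1) unfolding S_def by auto
      have pT: "p \<in> T" using p(1) unfolding S_def by auto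
      have "sh p \<notin> I"
      proof
        assume shI: "sh p \<in> I"
        have "(p, sh p) \<in> E" unfolding E_def using shI TsubI[OF T] pT adj by blast
        hence "sh p \<in> T" using comp_closed[of T I E p "sh p"] T shI pT unfolding Ts_def by blast
        thus False using nT by simp
      qed
      hence "p \<in> T \<inter> B" using pT TsubI[OF T] unfolding B_def by blast
      thus "y \<in> \<pi> ` (T \<inter> B)" using p(1) unfolding S_def by force
    qed
    hence "card (\<pi> ` T) \<le> card (\<pi> ` (T \<inter> B))"
      by (intro card_mono) (use finT[OF T] in auto)
    also have "\<dots> \<le> card (T \<inter> B)" by (rule card_image_le) (use finT[OF T] in auto)
    finally show ?thesis .
  qed
  have "(\<Sum>T\<in>Ts. card (\<pi> ` T)) \<le> (\<Sum>T\<in>Ts. card (T \<inter> B))" by (rule sum_mono) (rule each)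
  also have "\<dots> = card (\<Union>T\<in>Ts. T \<inter> B)"
    by (rule card_UN_disjoint[symmetric]) (use finTs finT quotient_disj[OF eq] TsQ in auto)
  also have "(\<Union>T\<in>Ts. T \<inter> B) = B"
    using Union_quotient[OF eq] TsQ unfolding B_def by blast
  finally show ?thesis unfolding B_def Ts_def E_def .
qed


lemma eright_eq: "eright p = H p" by (cases p) auto
lemma eleft_eq: "eleft p = H (fst p - 1, snd p)" by (cases p) auto
lemma eup_eq: "eup p = V p" by (cases p) auto
lemma edown_eq: "edown p = V (fst p, snd p - 1)" by (cases p) auto

lemma finite_box: "finite (box k)" unfolding box_def by simp

lemma card_box: "card (box k) = nat (2*k+1) * nat (2*k+1)" if "k \<ge> 0"
  unfolding box_def using that by (simp add: card_cartesian_product)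

lemma cpairs_finite: "finite (cpairs f k)"
proof -
  have "cpairs f k \<subseteq> (\<lambda>(a,b). (eright (f (a,b)), eleft (f (a+1,b)))) ` box k
      \<union> (\<lambda>(a,b). (eup (f (a,b)), edown (f (a,b+1)))) ` box k"
    unfolding cpairs_def by force
  moreover have "finite ((\<lambda>(a,b). (eright (f (a,b)), eleft (f (a+1,b)))) ` box k
      \<union> (\<lambda>(a,b). (eup (f (a,b)), edown (f (a,b+1)))) ` box k)" using finite_box by blast
  ultimately show ?thesis by (rule finite_subset)
qed

lemma cverts_finite: "finite (cverts f k)"
  unfolding cverts_def using cpairs_finite by auto

lemma edge_R:
  assumes "u \<in> box k" "(fst u + 1, snd u) \<in> box k" "(fst (f u) + 1, snd (f u)) \<notin> f ` box k"
  shows "H (f u) \<in> cverts f k"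
proof -
  obtain a b where u: "u = (a,b)" by (cases u)
  have "f (a+1,b) \<in> f ` box k" using assms(2) u by auto
  hence "(eright (f (a,b)), eleft (f (a+1,b))) \<in> cpairs f k"
    unfolding cpairs_def using assms u by auto
  moreover have "H (f u) = fst (eright (f (a,b)), eleft (f (a+1,b)))" by (simp add: u eright_eq)
  ultimately show ?thesis unfolding cverts_def by (metis UnI1 image_eqI)
qed

lemma edge_L:
  assumes "u \<in> box k" "(fst u - 1, snd u) \<in> box k" "(fst (f u) - 1, snd (f u)) \<notin> f ` box k"
  shows "H (fst (f u) - 1, snd (f u)) \<in> cverts f k"
proof -
  obtain a b where u: "u = (a,b)" by (cases u)
  have "f (a-1,b) \<in> f ` box k" using assms(2) u by auto
  hence ne: "f (a-1+1,b) \<noteq> (fst (f (a-1,b)) + 1, snd (f (a-1,b)))"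
    using assms(3) u by (auto simp: prod_eq_iff)
  have "(eright (f (a-1,b)), eleft (f (a-1+1,b))) \<in> cpairs f k"
    unfolding cpairs_def using assms u ne by auto
  moreover have "H (fst (f u) - 1, snd (f u)) = snd (eright (f (a-1,b)), eleft (f (a-1+1,b)))" by (simp add: u eleft_eq)
  ultimately show ?thesis unfolding cverts_def by (metis UnI2 image_eqI)
qed

lemma edge_U:
  assumes "u \<in> box k" "(fst u, snd u + 1) \<in> box k" "(fst (f u), snd (f u) + 1) \<notin> f ` box k"
  shows "V (f u) \<in> cverts f k"
proof -
  obtain a b where u: "u = (a,b)" by (cases u)
  have "f (a,b+1) \<in> f ` box k" using assms(2) u by auto
  hence "(eup (f (a,b)), edown (f (a,b+1))) \<in> cpairs f k"
    unfolding cpairs_def using assms u by auto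
  moreover have "V (f u) = fst (eup (f (a,b)), edown (f (a,b+1)))" by (simp add: u eup_eq)
  ultimately show ?thesis unfolding cverts_def by (metis UnI1 image_eqI)
qed

lemma edge_D:
  assumes "u \<in> box k" "(fst u, snd u - 1) \<in> box k" "(fst (f u), snd (f u) - 1) \<notin> f ` box k"
  shows "V (fst (f u), snd (f u) - 1) \<in> cverts f k"
proof -
  obtain a b where u: "u = (a,b)" by (cases u)
  have "f (a,b-1) \<in> f ` box k" using assms(2) u by auto
  hence ne: "f (a,b-1+1) \<noteq> (fst (f (a,b-1)), snd (f (a,b-1)) + 1)"
    using assms(3) u by (auto simp: prod_eq_iff)
  have "(eup (f (a,b-1)), edown (f (a,b-1+1))) \<in> cpairs f k"
    unfolding cpairs_def using assms u ne by auto
  moreover have "V (fst (f u), snd (f u) - 1) = snd (eup (f (a,b-1)), edown (f (a,b-1+1)))" by (simp add: u edown_eq)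
  ultimately show ?thesis unfolding cverts_def by (metis UnI2 image_eqI)
qed

lemma side_card:
  assumes "k \<ge> 0" and "\<And>u. u \<in> box k \<Longrightarrow> sh u \<notin> box k \<Longrightarrow> u \<in> S" and "S = {c} \<times> {-k..k} \<or> S = {-k..k} \<times> {c}"
  shows "card (f ` {u\<in>box k. sh u \<notin> box k}) \<le> nat (2*k+1)"
proof -
  have "card (f ` {u\<in>box k. sh u \<notin> box k}) \<le> card {u\<in>box k. sh u \<notin> box k}"
    by (rule card_image_le) (use finite_box in auto)
  also have "\<dots> \<le> card S" using assms(3) by (intro card_mono) (auto intro: assms(2))
  also have "card S = nat (2*k+1)" using assms(1,3) by (auto simp: card_cartesian_product)
  finally show ?thesis .
qed

lemma reduce_card:
  assumes "finite B" "B \<subseteq> B' \<union> X" "card X \<le> m" "finite X"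
  shows "int (card B) - int m \<le> int (card (B \<inter> B'))"
proof -
  have "B \<subseteq> (B \<inter> B') \<union> X" using assms(2) by blast
  hence "card B \<le> card ((B \<inter> B') \<union> X)" using assms by (intro card_mono) auto
  also have "\<dots> \<le> card (B \<inter> B') + card X" by (rule card_Un_le)
  finally show ?thesis using assms(3) by linarith
qed


lemma main_count:
  fixes f :: "int \<times> int \<Rightarrow> int \<times> int" and k :: int
  assumes k: "k \<ge> 0"
  defines "I \<equiv> f ` box k"
  shows "int (card {p\<in>I. (fst p + 1, snd p) \<notin> I}) + int (card {p\<in>I. (fst p - 1, snd p) \<notin> I})
       + int (card {p\<in>I. (fst p, snd p + 1) \<notin> I}) + int (card {p\<in>I. (fst p, snd p - 1) \<notin> I})
       - 4 * int (nat (2*k+1)) \<le> int (card (cverts f k))"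
proof -
  define BR where "BR = {p\<in>I. (fst p + 1, snd p) \<notin> I}"
  define BL where "BL = {p\<in>I. (fst p - 1, snd p) \<notin> I}"
  define BU where "BU = {p\<in>I. (fst p, snd p + 1) \<notin> I}"
  define BD where "BD = {p\<in>I. (fst p, snd p - 1) \<notin> I}"
  define CR where "CR = f ` {u\<in>box k. (fst u + 1, snd u) \<in> box k}"
  define CL where "CL = f ` {u\<in>box k. (fst u - 1, snd u) \<in> box k}"
  define CU where "CU = f ` {u\<in>box k. (fst u, snd u + 1) \<in> box k}"
  define CD where "CD = f ` {u\<in>box k. (fst u, snd u - 1) \<in> box k}"
  define XR where "XR = f ` {u\<in>box k. (\<lambda>u. (fst u + 1, snd u)) u \<notin> box k}"
  define XL where "XL = f ` {u\<in>box k. (\<lambda>u. (fst u - 1, snd u)) u \<notin> box k}"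
  define XU where "XU = f ` {u\<in>box k. (\<lambda>u. (fst u, snd u + 1)) u \<notin> box k}"
  define XD where "XD = f ` {u\<in>box k. (\<lambda>u. (fst u, snd u - 1)) u \<notin> box k}"
  define s where "s = nat (2*k+1)"
  have finI: "finite I" unfolding I_def using finite_box by simp
  have cXR: "card XR \<le> s" unfolding XR_def s_def
    by (rule side_card[OF k, where S="{k} \<times> {-k..k}"]) (auto simp: box_def)
  have cXL: "card XL \<le> s" unfolding XL_def s_def
    by (rule side_card[OF k, where S="{-k} \<times> {-k..k}"]) (auto simp: box_def)
  have cXU: "card XU \<le> s" unfolding XU_def s_def
    by (rule side_card[OF k, where S="{-k..k} \<times> {k}"]) (auto simp: box_def)
  have cXD: "card XD \<le> s" unfolding XD_def s_def
    by (rule side_card[OF k, where S="{-k..k} \<times> {-k}"]) (auto simp: box_def)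
  have fX: "finite XR" "finite XL" "finite XU" "finite XD"
    unfolding XR_def XL_def XU_def XD_def using finite_box by auto
  have r1: "int (card BR) - int s \<le> int (card (BR \<inter> CR))"
    by (rule reduce_card[OF _ _ cXR fX(1)]) (auto simp: BR_def CR_def XR_def I_def finite_box)
  have r2: "int (card BL) - int s \<le> int (card (BL \<inter> CL))"
    by (rule reduce_card[OF _ _ cXL fX(2)]) (auto simp: BL_def CL_def XL_def I_def finite_box)
  have r3: "int (card BU) - int s \<le> int (card (BU \<inter> CU))"
    by (rule reduce_card[OF _ _ cXU fX(3)]) (auto simp: BU_def CU_def XU_def I_def finite_box)
  have r4: "int (card BD) - int s \<le> int (card (BD \<inter> CD))"
    by (rule reduce_card[OF _ _ cXD fX(4)]) (auto simp: BD_def CD_def XD_def I_def finite_box)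
  define eR where "eR = (\<lambda>p::int\<times>int. H p)"
  define eL where "eL = (\<lambda>p::int\<times>int. H (fst p - 1, snd p))"
  define eU where "eU = (\<lambda>p::int\<times>int. V p)"
  define eD where "eD = (\<lambda>p::int\<times>int. V (fst p, snd p - 1))"
  have iR: "inj eR" unfolding eR_def inj_def by auto
  have iL: "inj eL" unfolding eL_def inj_def by (auto simp: prod_eq_iff)
  have iU: "inj eU" unfolding eU_def inj_def by auto
  have iD: "inj eD" unfolding eD_def inj_def by (auto simp: prod_eq_iff)
  have sR: "eR ` (BR \<inter> CR) \<subseteq> cverts f k"
    unfolding eR_def BR_def CR_def I_def by (auto intro!: edge_R)
  have sL: "eL ` (BL \<inter> CL) \<subseteq> cverts f k"
    unfolding eL_def BL_def CL_def I_def by (auto intro!: edge_L)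
  have sU: "eU ` (BU \<inter> CU) \<subseteq> cverts f k"
    unfolding eU_def BU_def CU_def I_def by (auto intro!: edge_U)
  have sD: "eD ` (BD \<inter> CD) \<subseteq> cverts f k"
    unfolding eD_def BD_def CD_def I_def by (auto intro!: edge_D)
  have fin4: "finite (BR \<inter> CR)" "finite (BL \<inter> CL)" "finite (BU \<inter> CU)" "finite (BD \<inter> CD)"
    unfolding BR_def BL_def BU_def BD_def using finI by auto
  have dRL: "eR ` (BR \<inter> CR) \<inter> eL ` (BL \<inter> CL) = {}"
    unfolding eR_def eL_def BR_def BL_def by force
  have dUD: "eU ` (BU \<inter> CU) \<inter> eD ` (BD \<inter> CD) = {}"
    unfolding eU_def eD_def BU_def BD_def by force
  have dHV: "(eR ` (BR \<inter> CR) \<union> eL ` (BL \<inter> CL)) \<inter> (eU ` (BU \<inter> CU) \<union> eD ` (BD \<inter> CD)) = {}"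
    unfolding eR_def eL_def eU_def eD_def by auto
  have "card ((eR ` (BR \<inter> CR) \<union> eL ` (BL \<inter> CL)) \<union> (eU ` (BU \<inter> CU) \<union> eD ` (BD \<inter> CD)))
      = card (eR ` (BR \<inter> CR) \<union> eL ` (BL \<inter> CL)) + card (eU ` (BU \<inter> CU) \<union> eD ` (BD \<inter> CD))"
    by (rule card_Un_disjoint) (use fin4 dHV in auto)
  also have "card (eR ` (BR \<inter> CR) \<union> eL ` (BL \<inter> CL)) = card (eR ` (BR \<inter> CR)) + card (eL ` (BL \<inter> CL))"
    by (rule card_Un_disjoint) (use fin4 dRL in auto)
  also have "card (eU ` (BU \<inter> CU) \<union> eD ` (BD \<inter> CD)) = card (eU ` (BU \<inter> CU)) + card (eD ` (BD \<inter> CD))"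
    by (rule card_Un_disjoint) (use fin4 dUD in auto)
  also have "card (eR ` (BR \<inter> CR)) = card (BR \<inter> CR)" using iR by (simp add: card_image inj_on_subset)
  also have "card (eL ` (BL \<inter> CL)) = card (BL \<inter> CL)" using iL by (simp add: card_image inj_on_subset)
  also have "card (eU ` (BU \<inter> CU)) = card (BU \<inter> CU)" using iU by (simp add: card_image inj_on_subset)
  also have "card (eD ` (BD \<inter> CD)) = card (BD \<inter> CD)" using iD by (simp add: card_image inj_on_subset)
  finally have eqc: "card ((eR ` (BR \<inter> CR) \<union> eL ` (BL \<inter> CL)) \<union> (eU ` (BU \<inter> CU) \<union> eD ` (BD \<inter> CD)))
     = card (BR \<inter> CR) + card (BL \<inter> CL) + (card (BU \<inter> CU) + card (BD \<inter> CD))" .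
  have "card ((eR ` (BR \<inter> CR) \<union> eL ` (BL \<inter> CL)) \<union> (eU ` (BU \<inter> CU) \<union> eD ` (BD \<inter> CD))) \<le> card (cverts f k)"
    by (rule card_mono[OF cverts_finite]) (use sR sL sU sD in auto)
  hence "card (BR \<inter> CR) + card (BL \<inter> CL) + (card (BU \<inter> CU) + card (BD \<inter> CD)) \<le> card (cverts f k)"
    using eqc by simp
  thus ?thesis using r1 r2 r3 r4 unfolding BR_def BL_def BU_def BD_def s_def by linarith
qed


lemma small_tile:
  fixes r c a s :: int
  assumes "a \<le> r*c" "a \<le> s*s" "1 \<le> r" "1 \<le> c" "0 \<le> s"
  shows "2*(s+a) \<le> (r+c)*(s+1)"
proof (cases "r + c \<ge> 2*s")
  case True
  have "2*s*(s+1) \<le> (r+c)*(s+1)" using True assms(5) by (intro mult_right_mono) auto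
  thus ?thesis using assms(2) by (simp add: algebra_simps)
next
  case False
  have "0 \<le> (r+c-2)*(2*s-(r+c))" using False assms by (intro mult_nonneg_nonneg) auto
  moreover have "4*(r*c) \<le> (r+c)*(r+c)"
    using zero_le_square[of "r-c"] by (simp add: algebra_simps)
  ultimately show ?thesis using assms(1) by (simp add: algebra_simps)
qed

lemma big_tile:
  fixes r c a s :: int
  assumes "a \<le> r*c" "a \<le> s*s" "36 \<le> a" "0 \<le> r" "0 \<le> c" "0 \<le> s"
  shows "12*s + 2*a \<le> (r+c)*(s+6)"
proof (cases "r + c \<ge> 2*s")
  case True
  have "2*s*(s+6) \<le> (r+c)*(s+6)" using True assms(6) by (intro mult_right_mono) auto
  thus ?thesis using assms(2) by (simp add: algebra_simps)
next
  case False
  have sq: "4*(r*c) \<le> (r+c)*(r+c)"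
    using zero_le_square[of "r-c"] by (simp add: algebra_simps)
  have "12 \<le> r + c"
  proof (rule ccontr)
    assume "\<not> 12 \<le> r + c"
    hence "(r+c)*(r+c) \<le> 11*11" using assms(4,5) by (intro mult_mono) auto
    thus False using sq assms(1,3) by linarith
  qed
  hence "0 \<le> (r+c-12)*(2*s-(r+c))" using False by (intro mult_nonneg_nonneg) auto
  thus ?thesis using assms(1) sq by (simp add: algebra_simps)
qed

lemma final1:
  fixes s t v g :: real
  assumes "s \<ge> 1" "t \<ge> 0" "(s+1) * v \<ge> 4*s*t" "2*g \<ge> v"
  shows "g \<ge> t * (2 - 2/s)"
proof -
  have "v \<ge> 4*s*t/(s+1)" using assms by (simp add: pos_divide_le_eq mult.commute)
  moreover have "4*s*t/(s+1) \<ge> 2*t*(2 - 2/s)"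
  proof -
    have "2*t*(2 - 2/s) = 4*t*(s-1)/s" using assms(1) by (simp add: field_simps)
    also have "\<dots> \<le> 4*s*t/(s+1)"
      using assms(1,2) by (simp add: field_simps)
    finally show ?thesis .
  qed
  ultimately show ?thesis using assms(4) by linarith
qed

lemma final2:
  fixes s t A X Y g :: real
  assumes "s \<ge> 9" "t \<ge> 0" "A \<le> s*s"
    "(s+1)*X \<ge> 2*s*(t-1) + 2*s*s - 2*A" "(s+6)*Y \<ge> 24*s + 2*A"
    "g \<ge> X + Y - 2*s"
  shows "g \<ge> 2*t*(1 - 1/s) + 4"
proof -
  have s0: "s > 0" using assms(1) by auto
  have h1: "s*(s+6)*((s+1)*X) \<ge> s*(s+6)*(2*s*(t-1) + 2*s*s - 2*A)"
    using assms(4) s0 by (intro mult_left_mono) auto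
  have h2: "s*(s+1)*((s+6)*Y) \<ge> s*(s+1)*(24*s + 2*A)"
    using assms(5) s0 by (intro mult_left_mono) auto
  have h3: "s*(s+1)*(s+6)*g \<ge> s*(s+1)*(s+6)*(X + Y - 2*s)"
    using assms(6) s0 by (intro mult_left_mono) auto
  have q: "3*s*s-14*s-12 \<ge> 0"
  proof -
    have "s*s \<ge> 9*s" using assms(1) by (intro mult_right_mono) auto
    thus ?thesis using assms(1) by linarith
  qed
  have h4: "0 \<le> 2*t*(s+6) + 10*s*(s*s-A) + 2*s*(3*s*s-14*s-12)"
    using assms(2,3) q s0 by (intro add_nonneg_nonneg mult_nonneg_nonneg) auto
  have m: "s*(s+1)*(s+6)*g \<ge> (s+1)*(s+6)*(2*t*s - 2*t + 4*s)"
    using h1 h2 h3 h4 by (simp add: algebra_simps) 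
  hence "s*g \<ge> 2*t*s - 2*t + 4*s"
  proof -
    have "(s+1)*(s+6)*(s*g) \<ge> (s+1)*(s+6)*(2*t*s - 2*t + 4*s)" using m by (simp add: algebra_simps)
    thus ?thesis using s0 by (simp add: mult_le_cancel_left_pos)
  qed
  hence "g \<ge> (2*t*s - 2*t + 4*s)/s" using s0 by (simp add: pos_divide_le_eq mult.commute)
  moreover have "(2*t*s - 2*t + 4*s)/s = 2*t*(1 - 1/s) + 4" using s0 by (simp add: field_simps)
  ultimately show ?thesis by simp
qed


lemma cpairs_neq: "(x,y) \<in> cpairs f k \<Longrightarrow> x \<noteq> y"
  unfolding cpairs_def by (auto simp: eright_eq eleft_eq eup_eq edown_eq prod_eq_iff)

lemma gamma_half: "int (card (cverts f k)) \<le> 2 * gamma f k"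
proof -
  have "2 * card (components (cverts f k) (cpairs f k)) \<le> card (cverts f k)"
  proof (rule comp_card_half[OF cverts_finite])
    fix x assume "x \<in> cverts f k"
    then consider y where "(x,y) \<in> cpairs f k" | y where "(y,x) \<in> cpairs f k"
      unfolding cverts_def by force
    thus "\<exists>y\<in>cverts f k. y \<noteq> x \<and> ((x, y) \<in> cpairs f k \<or> (y, x) \<in> cpairs f k)"
    proof cases
      case (1 y) thus ?thesis using cpairs_neq[OF 1] unfolding cverts_def by force
    next
      case (2 y) thus ?thesis using cpairs_neq[OF 2] unfolding cverts_def by force
    qed
  qed
  hence "2 * int (card (components (cverts f k) (cpairs f k))) \<le> int (card (cverts f k))" by linarith
  thus ?thesis by (simp add: gamma_def)
qed

lemma tile_facts:
  assumes "T \<in> tiles f k"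
  shows "finite T" "T \<noteq> {}" "T \<subseteq> f ` box k"
    "card T \<le> card (fst ` T) * card (snd ` T)"
proof -
  let ?I = "f ` box k" and ?E = "{(a,b). a \<in> f ` box k \<and> b \<in> f ` box k \<and> gadj a b}"
  have eq: "equiv ?I (crel ?I ?E)" by (rule crel_equiv)
  have TQ: "T \<in> ?I // crel ?I ?E" using assms unfolding tiles_def components_crel .
  show "T \<subseteq> f ` box k" using in_quotient_imp_subset[OF eq TQ] .
  thus fT: "finite T" using finite_box finite_subset by blast
  show "T \<noteq> {}" using in_quotient_imp_non_empty[OF eq TQ] .
  have sub: "T \<subseteq> fst ` T \<times> snd ` T"
  proof
    fix p assume "p \<in> T"
    thus "p \<in> fst ` T \<times> snd ` T" by (simp add: mem_Times_iff)
  qed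
  have "card T \<le> card (fst ` T \<times> snd ` T)"
    using fT sub by (intro card_mono) auto
  thus "card T \<le> card (fst ` T) * card (snd ` T)" by (simp add: card_cartesian_product)
qed


theorem lemma4p1:
  fixes k n :: int and t :: nat and f :: "int \<times> int \<Rightarrow> int \<times> int"
  assumes "k \<ge> 1"
    and "inj_on f (box k)"
    and "f ` box k \<subseteq> grid n"
    and "card (tiles f k) = t + 1"
    and "t + 1 \<ge> 2"
  shows "real_of_int (gamma f k) \<ge> real t * (2 - 2 / real_of_int (2*k+1))
    \<and> ((\<exists>T1 \<in> tiles f k. \<exists>T2 \<in> tiles f k. T1 \<noteq> T2 \<and> card T1 > 35 \<and> card T2 > 35)
        \<longrightarrow> real_of_int (gamma f k) \<ge> 2 * real t * (1 - 1 / real_of_int (2*k+1)) + 4)"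
proof -
  define I where "I = f ` box k"
  define Ts where "Ts = tiles f k"
  define S where "S = 2*k+1"
  have S_nat: "int (nat (2*k+1)) = S" using assms(1) unfolding S_def by simp
  have finI: "finite I" unfolding I_def using finite_box by simp
  have Ts_comp: "Ts = components I {(a,b). a \<in> I \<and> b \<in> I \<and> gadj a b}"
    unfolding Ts_def I_def tiles_def ..
  have finTs: "finite Ts" unfolding Ts_comp by (rule comp_finite[OF finI])
  have cardI: "card I = nat (2*k+1) * nat (2*k+1)"
    unfolding I_def using card_image[OF assms(2)] card_box assms(1) by simp
  have sumA: "(\<Sum>T\<in>Ts. int (card T)) = S * S"
  proof -
    have "(\<Sum>T\<in>Ts. card T) = card I" unfolding Ts_comp by (rule comp_sum_card[OF finI])
    hence "(\<Sum>T\<in>Ts. int (card T)) = int (card I)" by (metis of_nat_sum)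
    thus ?thesis using cardI S_nat by simp
  qed
  define w where "w T = int (card (snd ` T)) + int (card (fst ` T))" for T :: "(int\<times>int) set"
  define a where "a T = int (card T)" for T :: "(int\<times>int) set"
  have bR: "(\<Sum>T\<in>Ts. card (snd ` T)) \<le> card {p\<in>I. (fst p + 1, snd p) \<notin> I}"
    unfolding Ts_comp
    by (rule boundary_count[OF finI, where \<phi>=fst]) (auto simp: gadj_def)
  have bL: "(\<Sum>T\<in>Ts. card (snd ` T)) \<le> card {p\<in>I. (fst p - 1, snd p) \<notin> I}"
    unfolding Ts_comp
    by (rule boundary_count[OF finI, where \<phi>="\<lambda>p. - fst p"]) (auto simp: gadj_def)
  have bU: "(\<Sum>T\<in>Ts. card (fst ` T)) \<le> card {p\<in>I. (fst p, snd p + 1) \<notin> I}"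
    unfolding Ts_comp
    by (rule boundary_count[OF finI, where \<phi>=snd]) (auto simp: gadj_def)
  have bD: "(\<Sum>T\<in>Ts. card (fst ` T)) \<le> card {p\<in>I. (fst p, snd p - 1) \<notin> I}"
    unfolding Ts_comp
    by (rule boundary_count[OF finI, where \<phi>="\<lambda>p. - snd p"]) (auto simp: gadj_def)
  have mc: "int (card {p\<in>I. (fst p + 1, snd p) \<notin> I}) + int (card {p\<in>I. (fst p - 1, snd p) \<notin> I})
       + int (card {p\<in>I. (fst p, snd p + 1) \<notin> I}) + int (card {p\<in>I. (fst p, snd p - 1) \<notin> I})
       - 4 * S \<le> int (card (cverts f k))"
    using main_count[of k f] assms(1) S_nat unfolding I_def by simp
  have sumw: "(\<Sum>T\<in>Ts. w T) = int (\<Sum>T\<in>Ts. card (snd ` T)) + int (\<Sum>T\<in>Ts. card (fst ` T))"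
    unfolding w_def by (simp add: sum.distrib)
  have Vb: "2 * (\<Sum>T\<in>Ts. w T) - 4 * S \<le> int (card (cverts f k))"
    using mc bR bL bU bD sumw by linarith
  have gb: "2 * (\<Sum>T\<in>Ts. w T) - 4 * S \<le> 2 * gamma f k"
    using Vb gamma_half[of f k] by linarith
  have S9: "S \<ge> 3" using assms(1) unfolding S_def by simp
  have tf: "\<And>T. T \<in> Ts \<Longrightarrow> a T \<le> int (card (snd ` T)) * int (card (fst ` T))
      \<and> a T \<le> S * S \<and> 1 \<le> int (card (snd ` T)) \<and> 1 \<le> int (card (fst ` T))"
  proof -
    fix T assume T: "T \<in> Ts"
    note F = tile_facts[OF T[unfolded Ts_def]]
    have "card T \<le> card I" using F(3) finI unfolding I_def by (intro card_mono) auto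
    hence "int (card T) \<le> int (nat (2*k+1)) * int (nat (2*k+1))" using cardI
      by (metis of_nat_le_iff of_nat_mult)
    hence "a T \<le> S * S" unfolding a_def using S_nat by simp
    moreover have "a T \<le> int (card (snd ` T)) * int (card (fst ` T))"
      unfolding a_def using F(4) by (simp flip: of_nat_mult add: mult.commute)
    moreover have "card (snd ` T) \<noteq> 0" "card (fst ` T) \<noteq> 0" using F(1,2) by auto
    ultimately show "a T \<le> int (card (snd ` T)) * int (card (fst ` T))
      \<and> a T \<le> S * S \<and> 1 \<le> int (card (snd ` T)) \<and> 1 \<le> int (card (fst ` T))" by linarith
  qed
  have small: "\<And>T. T \<in> Ts \<Longrightarrow> 2*(S + a T) \<le> w T * (S+1)"
    unfolding w_def using tf S9 by (intro small_tile) auto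
  have big: "\<And>T. T \<in> Ts \<Longrightarrow> 36 \<le> a T \<Longrightarrow> 12*S + 2*a T \<le> w T * (S+6)"
    unfolding w_def using tf S9 by (intro big_tile) auto
  have p1: "real_of_int (gamma f k) \<ge> real t * (2 - 2 / real_of_int (2*k+1))"
  proof -
    have "(\<Sum>T\<in>Ts. 2*(S + a T)) \<le> (\<Sum>T\<in>Ts. w T * (S+1))" by (rule sum_mono) (rule small)
    also have "(\<Sum>T\<in>Ts. 2*(S + a T)) = 2*S*int (t+1) + 2*(S*S)"
      using sumA assms(4) unfolding Ts_def[symmetric] a_def
      by (simp add: sum.distrib flip: sum_distrib_left)
    also have "(\<Sum>T\<in>Ts. w T * (S+1)) = (\<Sum>T\<in>Ts. w T) * (S+1)" by (simp add: sum_distrib_right)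
    finally have h: "2*S*int (t+1) + 2*(S*S) \<le> (\<Sum>T\<in>Ts. w T) * (S+1)" .
    have "(2 * (\<Sum>T\<in>Ts. w T) - 4 * S) * (S+1) \<le> (2 * gamma f k) * (S+1)"
      using gb S9 by (intro mult_right_mono) auto
    hence "4*S*int t \<le> (2 * gamma f k) * (S+1)" using h by (simp add: algebra_simps)
    hence "real_of_int (4*S*int t) \<le> real_of_int ((2 * gamma f k) * (S+1))" by linarith
    hence "(real_of_int S + 1) * (2 * real_of_int (gamma f k)) \<ge> 4 * real_of_int S * real t"
      by (simp add: algebra_simps)
    thus ?thesis unfolding S_def[symmetric]
      by (intro final1[where v="2 * real_of_int (gamma f k)"]) (use S9 in auto)
  qed
  have p2: "(\<exists>T1 \<in> tiles f k. \<exists>T2 \<in> tiles f k. T1 \<noteq> T2 \<and> card T1 > 35 \<and> card T2 > 35)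
        \<longrightarrow> real_of_int (gamma f k) \<ge> 2 * real t * (1 - 1 / real_of_int (2*k+1)) + 4"
  proof
    assume "\<exists>T1 \<in> tiles f k. \<exists>T2 \<in> tiles f k. T1 \<noteq> T2 \<and> card T1 > 35 \<and> card T2 > 35"
    then obtain T1 T2 where T: "T1 \<in> Ts" "T2 \<in> Ts" "T1 \<noteq> T2" "a T1 \<ge> 36" "a T2 \<ge> 36"
      unfolding Ts_def a_def by force
    define Os where "Os = Ts - {T1, T2}"
    have finO: "finite Os" using finTs unfolding Os_def by simp
    have cO: "card Os = t - 1" using assms(4) T unfolding Os_def Ts_def by (simp add: card_Diff_subset)
    have split: "\<And>g :: (int\<times>int) set \<Rightarrow> int. (\<Sum>T\<in>Ts. g T) = g T1 + g T2 + (\<Sum>T\<in>Os. g T)"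
    proof -
      fix g :: "(int\<times>int) set \<Rightarrow> int"
      have "(\<Sum>T\<in>Ts. g T) = g T1 + (\<Sum>T\<in>Ts - {T1}. g T)" by (rule sum.remove[OF finTs T(1)])
      also have "(\<Sum>T\<in>Ts - {T1}. g T) = g T2 + (\<Sum>T\<in>Ts - {T1} - {T2}. g T)"
        by (rule sum.remove) (use finTs T in auto)
      also have "Ts - {T1} - {T2} = Os" unfolding Os_def by auto
      finally show "(\<Sum>T\<in>Ts. g T) = g T1 + g T2 + (\<Sum>T\<in>Os. g T)" by simp
    qed
    have "(\<Sum>T\<in>Os. 2*(S + a T)) \<le> (\<Sum>T\<in>Os. w T * (S+1))"
      by (rule sum_mono) (use small Os_def in auto)
    also have "(\<Sum>T\<in>Os. 2*(S + a T)) = 2*S*int (t-1) + 2*(\<Sum>T\<in>Os. a T)"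
      using cO by (simp add: sum.distrib flip: sum_distrib_left)
    also have "(\<Sum>T\<in>Os. w T * (S+1)) = (S+1) * (\<Sum>T\<in>Os. w T)" by (simp add: sum_distrib_left mult.commute)
    finally have hO: "2*S*int (t-1) + 2*(\<Sum>T\<in>Os. a T) \<le> (S+1) * (\<Sum>T\<in>Os. w T)" .
    have sA: "a T1 + a T2 + (\<Sum>T\<in>Os. a T) = S*S" using sumA split[of a] unfolding a_def by simp
    have Onn: "(\<Sum>T\<in>Os. a T) \<ge> 0" unfolding a_def by (simp add: sum_nonneg)
    have hB: "12*S + 2*a T1 + (12*S + 2*a T2) \<le> (S+6) * (w T1 + w T2)"
      using big[OF T(1,4)] big[OF T(2,5)] by (simp add: algebra_simps)
    have gw: "2 * (w T1 + w T2 + (\<Sum>T\<in>Os. w T)) - 4 * S \<le> 2 * gamma f k"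
      using gb split[of w] by simp
    have "S*S \<ge> 72" using sA Onn T(4,5) by linarith
    hence S9': "S \<ge> 9"
    proof -
      assume h: "S*S \<ge> 72"
      show "S \<ge> 9"
      proof (rule ccontr)
        assume "\<not> S \<ge> 9"
        hence "S*S \<le> 8*8" using S9 by (intro mult_mono) auto
        thus False using h by simp
      qed
    qed
    have t1: "t \<ge> 1" using assms(5) by simp
    let ?s = "real_of_int S" and ?A = "real_of_int (a T1 + a T2)"
      and ?X = "real_of_int (\<Sum>T\<in>Os. w T)" and ?Y = "real_of_int (w T1 + w T2)"
    have r1: "?s \<ge> 9" using S9' by simp
    have r2: "?A \<le> ?s * ?s" using sA Onn by (simp flip: of_int_mult)
    have r3: "(?s+1)*?X \<ge> 2*?s*(real t-1) + 2*?s*?s - 2*?A"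
    proof -
      have "real_of_int (2*S*int (t-1) + 2*(\<Sum>T\<in>Os. a T)) \<le> real_of_int ((S+1) * (\<Sum>T\<in>Os. w T))"
        using hO by linarith
      moreover have "real_of_int (\<Sum>T\<in>Os. a T) = ?s*?s - ?A" using sA
        by (metis add_diff_cancel_left' of_int_diff of_int_mult)
      ultimately show ?thesis using t1 by (simp add: of_nat_diff algebra_simps)
    qed
    have r4: "(?s+6)*?Y \<ge> 24*?s + 2*?A"
    proof -
      have "real_of_int (12*S + 2*a T1 + (12*S + 2*a T2)) \<le> real_of_int ((S+6) * (w T1 + w T2))"
        using hB by linarith
      thus ?thesis by (simp add: algebra_simps)
    qed
    have r5: "real_of_int (gamma f k) \<ge> ?X + ?Y - 2*?s"
    proof -
      have "real_of_int (2 * (w T1 + w T2 + (\<Sum>T\<in>Os. w T)) - 4 * S) \<le> real_of_int (2 * gamma f k)"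
        using gw by linarith
      thus ?thesis by (simp add: algebra_simps)
    qed
    show "real_of_int (gamma f k) \<ge> 2 * real t * (1 - 1 / real_of_int (2*k+1)) + 4"
      unfolding S_def[symmetric]
      by (rule final2[OF r1 _ r2 r3 r4 r5]) simp
  qed
  show ?thesis using p1 p2 by blast
qed

end
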